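(* Let $f$ be a bounded holomorphic function on the open unit disk $\mathbb{D}=\{z\in\mathbb{C}:|z|<1\}$, with $\|f\|_{H^\infty}=\sup_{z\in\mathbb{D}}|f(z)|$. For $0\le r<1$ define $$A(r,f)=\int_0^r\int_0^{2\pi}|f'(\rho e^{i\theta})|^2\,\rho\,d\theta\,d\rho .$$ Then for every $0\le r<1$, $$A(r,f)\le \frac12\,\|f\|_{H^\infty}\int_0^{2\pi}|f'(re^{i\theta})|\,d\theta .$$
   Context: $H^\infty$ denotes the space of bounded holomorphic functions on the unit disk $\mathbb{D}$ with the supremum norm. The quantity $A(r,f)$ is the area (counted with multiplicity) of the image of the closed disk $\{|z|\le r\}$ under $f$. *)

theory Defs
  imports "HOL-Complex_Analysis.Complex_Analysis"
begin

definition Hinf_norm :: "(complex \<Rightarrow> complex) \<Rightarrow> real" where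
  "Hinf_norm f = (SUP z\<in>ball 0 1. cmod (f z))"

text \<open>A(r,f): area (with multiplicity) of the image of the closed disk of radius r,
  written as the iterated integral of |f'|^2 in polar coordinates.\<close>
definition area_fn :: "real \<Rightarrow> (complex \<Rightarrow> complex) \<Rightarrow> real" where
  "area_fn r f = integral {0..r}
     (\<lambda>\<rho>. integral {0..2*pi} (\<lambda>\<theta>. (cmod (deriv f (of_real \<rho> * cis \<theta>)))\<^sup>2 * \<rho>))"

end

theory Submission
  imports Defs
begin


lemma termwise_integral:
  fixes u :: "nat \<Rightarrow> real \<Rightarrow> 'c::banach"
  assumes cont: "\<And>n. continuous_on {a..b} (u n)"
    and bound: "\<And>n x. x \<in> {a..b} \<Longrightarrow> norm (u n x) \<le> M n"
    and M: "summable M"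
  shows "(\<lambda>n. integral {a..b} (u n)) sums integral {a..b} (\<lambda>x. \<Sum>i. u i x)"
proof -
  have U: "uniform_limit {a..b} (\<lambda>n x. \<Sum>i<n. u i x) (\<lambda>x. \<Sum>i. u i x) sequentially"
    using bound M by (rule Weierstrass_m_test)
  have C: "continuous_on {a..b} (\<lambda>x. \<Sum>i<n. u i x)" for n
    by (intro continuous_on_sum cont) 
  obtain I J where I: "\<And>n. ((\<lambda>x. \<Sum>i<n. u i x) has_integral I n) {a..b}"
    and J: "((\<lambda>x. \<Sum>i. u i x) has_integral J) {a..b}" and L: "(I \<longlongrightarrow> J) sequentially"
    using uniform_limit_integral[OF U C] by auto
  have "I n = (\<Sum>i<n. integral {a..b} (u i))" for n
  proof -
    have "I n = integral {a..b} (\<lambda>x. \<Sum>i<n. u i x)" using I[of n] by (simp add: integral_unique)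
    also have "\<dots> = (\<Sum>i<n. integral {a..b} (u i))"
      by (rule integral_sum) (auto intro: integrable_continuous_interval cont)
    finally show ?thesis .
  qed
  then have "(\<lambda>n. \<Sum>i<n. integral {a..b} (u i)) = I" by (simp add: fun_eq_iff)
  then have "(\<lambda>n. integral {a..b} (u n)) sums J" using L by (simp add: sums_def)
  then show ?thesis using J by (simp add: integral_unique)
qed

lemma integral_exp_aux:
  assumes  "T \<ge> 0" "a\<noteq>0"
  shows "integral {0..T} (\<lambda>t. exp(a * complex_of_real t)) = (exp(a * of_real T) - 1) / a"
proof -
  have "\<And>t. t \<in> {0..T} \<Longrightarrow> ((\<lambda>x. exp (a * x) / a) has_vector_derivative exp (a * t)) (at t within {0..T})"
    using assms
    by (intro derivative_eq_intros has_complex_derivative_imp_has_vector_derivative [unfolded o_def] | simp)+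
  then have "((\<lambda>t. exp(a * of_real t)) has_integral exp(a * complex_of_real T)/a - exp(a * of_real 0)/a)  {0..T}"
    by (meson fundamental_theorem_of_calculus \<open>T \<ge> 0\<close>)
  then show ?thesis
    by (simp add: diff_divide_distrib integral_unique)
qed

lemma integral_cis_int:
  assumes "k \<in> \<int>" "k \<noteq> 0"
  shows "integral {0..2*pi} (\<lambda>t. cis (k * t)) = 0"
proof -
  have e: "cis (k * t) = exp ((\<i> * of_real k) * of_real t)" for t
    by (simp add: cis_conv_exp mult.assoc)
  have "integral {0..2*pi} (\<lambda>t. cis (k * t)) = (exp((\<i> * of_real k) * of_real (2*pi)) - 1) / (\<i> * of_real k)"
    unfolding e using assms by (intro integral_exp_aux) auto
  moreover have "exp((\<i> * of_real k) * of_real (2*pi)) = 1"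
    using cis_multiple_2pi[OF assms(1)] e[of "2*pi"] by (simp add: mult.commute)
  ultimately show ?thesis by simp
qed

lemma integral_orth:
  fixes \<rho> :: real
  shows "integral {0..2*pi} (\<lambda>\<theta>. cnj (of_real \<rho> * cis \<theta>) ^ n * (of_real \<rho> * cis \<theta>) ^ m)
     = (if m = n then of_real (2*pi*\<rho>^(2*n)) else 0)"
proof -
  have e: "cnj (of_real \<rho> * cis \<theta>) ^ n * (of_real \<rho> * cis \<theta>) ^ m = of_real (\<rho>^(n+m)) * cis ((real m - real n) * \<theta>)" for \<theta>
  proof -
    have "cnj (of_real \<rho> * cis \<theta>) ^ n * (of_real \<rho> * cis \<theta>) ^ m
       = (of_real \<rho> ^ n * cis (- \<theta>) ^ n) * (of_real \<rho> ^ m * cis \<theta> ^ m)"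
      by (simp add: cis_cnj power_mult_distrib)
    also have "\<dots> = of_real (\<rho>^(n+m)) * (cis (real n * (- \<theta>)) * cis (real m * \<theta>))"
      unfolding Complex.DeMoivre of_real_power power_add by (simp add: mult_ac)
    also have "\<dots> = of_real (\<rho>^(n+m)) * cis ((real m - real n) * \<theta>)"
      by (simp add: cis_mult algebra_simps)
    finally show ?thesis .
  qed
  show ?thesis
  proof (cases "m = n")
    case True
    then show ?thesis unfolding e by (simp add: scaleR_conv_of_real flip: mult_2)
  next
    case False
    have "integral {0..2*pi} (\<lambda>\<theta>. of_real (\<rho>^(n+m)) * cis ((real m - real n) * \<theta>))
       = of_real (\<rho>^(n+m)) * integral {0..2*pi} (\<lambda>\<theta>. cis ((real m - real n) * \<theta>))"
      by (rule integral_mult_right)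
    also have "\<dots> = 0" using False
      by (subst integral_cis_int) auto
    finally show ?thesis unfolding e using False by simp
  qed
qed


lemma parseval_circle:
  fixes b c :: "nat \<Rightarrow> complex" and G H :: "real \<Rightarrow> complex" and \<rho> :: real
  assumes rho: "0 \<le> \<rho>"
   and Gs: "\<And>\<theta>. (\<lambda>n. b n * (of_real \<rho> * cis \<theta>)^n) sums G \<theta>"
   and Hs: "\<And>\<theta>. (\<lambda>n. c n * (of_real \<rho> * cis \<theta>)^n) sums H \<theta>"
   and Hc: "continuous_on {0..2*pi} H"
   and bsum: "summable (\<lambda>n. norm (b n) * \<rho>^n)"
   and csum: "summable (\<lambda>n. norm (c n) * \<rho>^n)"
  shows "(\<lambda>n. cnj (b n) * (c n * of_real (2*pi*\<rho>^(2*n)))) sums integral {0..2*pi} (\<lambda>\<theta>. cnj (G \<theta>) * H \<theta>)"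
proof -
  define w where "w \<theta> = of_real \<rho> * cis \<theta>" for \<theta>
  have nw: "norm (w \<theta>) = \<rho>" for \<theta> using rho by (simp add: w_def norm_mult)
  have wc: "continuous_on {0..2*pi} w" unfolding w_def by (intro continuous_intros)
  define K where "K = (\<Sum>n. norm (c n) * \<rho>^n)"
  have HK: "norm (H \<theta>) \<le> K" for \<theta>
  proof -
    have s: "summable (\<lambda>n. norm (c n * w \<theta> ^ n))" using csum by (simp add: norm_mult norm_power nw)
    have "H \<theta> = (\<Sum>n. c n * w \<theta> ^ n)" using Hs[of \<theta>] by (simp add: w_def sums_iff)
    then have "norm (H \<theta>) \<le> (\<Sum>n. norm (c n * w \<theta> ^ n))" using summable_norm[OF s] by simp
    also have "\<dots> = K" by (simp add: K_def norm_mult norm_power nw)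
    finally show ?thesis .
  qed
  have step1: "integral {0..2*pi} (\<lambda>\<theta>. cnj (w \<theta>)^n * H \<theta>) = c n * of_real (2*pi*\<rho>^(2*n))" for n
  proof -
    define u where "u m \<theta> = c m * (cnj (w \<theta>)^n * w \<theta>^m)" for m \<theta>
    have "(\<lambda>m. integral {0..2*pi} (u m)) sums integral {0..2*pi} (\<lambda>\<theta>. \<Sum>m. u m \<theta>)"
    proof (rule termwise_integral)
      show "continuous_on {0..2*pi} (u m)" for m unfolding u_def by (intro continuous_intros wc)
      show "norm (u m \<theta>) \<le> \<rho>^n * (norm (c m) * \<rho>^m)" for m \<theta>
        by (simp add: u_def norm_mult norm_power nw)
      show "summable (\<lambda>m. \<rho>^n * (norm (c m) * \<rho>^m))" using csum by (rule summable_mult)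
    qed
    moreover have "(\<Sum>m. u m \<theta>) = cnj (w \<theta>)^n * H \<theta>" for \<theta>
    proof -
      have "(\<lambda>m. cnj (w \<theta>)^n * (c m * w \<theta>^m)) sums (cnj (w \<theta>)^n * H \<theta>)"
        using Hs[of \<theta>] unfolding w_def by (rule sums_mult)
      then show ?thesis by (simp add: u_def sums_iff mult_ac)
    qed
    moreover have "integral {0..2*pi} (u m) = (if m = n then c n * of_real (2*pi*\<rho>^(2*n)) else 0)" for m
      unfolding u_def w_def by (simp only: integral_mult_right integral_orth) simp
    ultimately have "(\<lambda>m. if m = n then c n * of_real (2*pi*\<rho>^(2*n)) else 0) sums integral {0..2*pi} (\<lambda>\<theta>. cnj (w \<theta>)^n * H \<theta>)"
      by simp
    moreover have "(\<lambda>m. if m = n then c n * of_real (2*pi*\<rho>^(2*n)) else 0) sums (c n * of_real (2*pi*\<rho>^(2*n)))"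
    proof -
      have "(\<lambda>m. if m = n then c n * of_real (2*pi*\<rho>^(2*n)) else 0) = (\<lambda>m. if m = n then c m * of_real (2*pi*\<rho>^(2*m)) else 0)"
        by auto
      then show ?thesis using sums_single[of n "\<lambda>m. c m * of_real (2*pi*\<rho>^(2*m))"] by simp
    qed
    ultimately show ?thesis using sums_unique2 by blast
  qed
  define u where "u n \<theta> = cnj (b n) * (cnj (w \<theta>)^n * H \<theta>)" for n \<theta>
  have "(\<lambda>n. integral {0..2*pi} (u n)) sums integral {0..2*pi} (\<lambda>\<theta>. \<Sum>n. u n \<theta>)"
  proof (rule termwise_integral)
    show "continuous_on {0..2*pi} (u m)" for m unfolding u_def by (intro continuous_intros wc Hc)
    show "norm (u m \<theta>) \<le> K * (norm (b m) * \<rho>^m)" if "\<theta> \<in> {0..2*pi}" for m \<theta>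
    proof -
      have "norm (u m \<theta>) = (norm (b m) * \<rho>^m) * norm (H \<theta>)"
        by (simp add: u_def norm_mult norm_power nw)
      also have "\<dots> \<le> (norm (b m) * \<rho>^m) * K" using HK rho by (intro mult_left_mono) auto
      finally show ?thesis by (simp add: mult_ac)
    qed
    show "summable (\<lambda>m. K * (norm (b m) * \<rho>^m))" using bsum by (rule summable_mult)
  qed
  moreover have "(\<Sum>n. u n \<theta>) = cnj (G \<theta>) * H \<theta>" for \<theta>
  proof -
    have "(\<lambda>n. cnj (b n * w \<theta>^n)) sums cnj (G \<theta>)" using Gs[of \<theta>] unfolding w_def sums_cnj .
    then have "(\<lambda>n. cnj (b n * w \<theta>^n) * H \<theta>) sums (cnj (G \<theta>) * H \<theta>)" by (rule sums_mult2)
    then show ?thesis by (simp add: u_def sums_iff mult_ac)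
  qed
  moreover have "integral {0..2*pi} (u n) = cnj (b n) * (c n * of_real (2*pi*\<rho>^(2*n)))" for n
    unfolding u_def by (simp add: integral_mult_right step1)
  ultimately show ?thesis by simp
qed



definition coef :: "(complex \<Rightarrow> complex) \<Rightarrow> nat \<Rightarrow> complex" where
  "coef g n = (deriv ^^ n) g 0 / fact n"

lemma ps_sums:
  assumes "g holomorphic_on ball 0 1" "norm w < 1"
  shows "(\<lambda>n. coef g n * w^n) sums g w"
  using holomorphic_power_series[OF assms(1), of w] assms(2) by (simp add: coef_def)

lemma ps_abs:
  assumes "g holomorphic_on ball 0 1" "0 \<le> \<rho>" "\<rho> < 1"
  shows "summable (\<lambda>n. norm (coef g n) * \<rho>^n)"
proof -
  have e: "norm (of_real ((1+\<rho>)/2) :: complex) = \<bar>(1+\<rho>)/2\<bar>" by (rule norm_of_real)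
  then have "norm (of_real ((1+\<rho>)/2) :: complex) < 1" using assms by simp
  from ps_sums[OF assms(1) this]
  have "summable (\<lambda>n. coef g n * (of_real ((1+\<rho>)/2))^n)"
    by (rule sums_summable)
  moreover have "norm (of_real \<rho> :: complex) < norm (of_real ((1+\<rho>)/2) :: complex)"
    using e assms by simp
  ultimately have "summable (\<lambda>n. norm (coef g n * (of_real \<rho>) ^ n))" by (rule powser_insidea)
  then show ?thesis using assms(2) by (simp add: norm_mult norm_power)
qed

lemma integral_of_real_cont:
  fixes g :: "real \<Rightarrow> real"
  assumes "continuous_on {a..b} g"
  shows "integral {a..b} (\<lambda>x. of_real (g x) :: complex) = of_real (integral {a..b} g)"
proof -
  have "((\<lambda>x. of_real (g x) :: complex) has_integral of_real (integral {a..b} g)) {a..b}"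
    by (rule has_integral_of_real[OF integrable_integral[OF integrable_continuous_interval[OF assms]]])
  then show ?thesis by (rule integral_unique)
qed

lemma integral_pow:
  assumes "0 \<le> r"
  shows "integral {0..r} (\<lambda>x::real. x^k) = r^(Suc k) / Suc k"
proof -
  have "((\<lambda>x::real. x^Suc k / Suc k) has_vector_derivative x^k) (at x within {0..r})" for x
  proof -
    have "((\<lambda>x::real. x^Suc k / Suc k) has_real_derivative (real (Suc k) * x^k / Suc k)) (at x within {0..r})"
    proof -
      have "DERIV (\<lambda>x::real. x^Suc k) x :> real (Suc k) * x^k" using DERIV_pow[of "Suc k" x] by simp
      from DERIV_cdivide[OF this, of "real (Suc k)"] show ?thesis
        by (rule has_field_derivative_at_within)
    qed
    then show ?thesis by (simp add: has_real_derivative_iff_has_vector_derivative)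
  qed
  then have "((\<lambda>x::real. x^k) has_integral (r^Suc k / Suc k - 0^Suc k / Suc k)) {0..r}"
    using assms by (intro fundamental_theorem_of_calculus) auto
  then show ?thesis by (simp add: integral_unique)
qed



lemma coef_deriv:
  "coef (deriv f) n = of_nat (Suc n) * coef f (Suc n)"
proof -
  have "(deriv ^^ n) (deriv f) = (deriv ^^ Suc n) f" by (simp add: funpow_Suc_right del: funpow.simps)
  moreover have "(of_nat (Suc n) :: complex) \<noteq> 0" by (rule of_nat_neq_0)
  ultimately show ?thesis unfolding coef_def by (simp add: divide_simps del: funpow.simps of_nat_Suc)
qed

theorem mainTheorem1:
  fixes f :: "complex \<Rightarrow> complex" and r :: real
  assumes "f holomorphic_on ball 0 1"
    and "bounded (f ` ball 0 1)"
    and "0 \<le> r" and "r < 1"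
  shows "area_fn r f \<le>
           (1/2) * Hinf_norm f * integral {0..2*pi} (\<lambda>\<theta>. cmod (deriv f (of_real r * cis \<theta>)))"
proof -
  note hf = assms(1)
  define f' where "f' = deriv f"
  have hf': "f' holomorphic_on ball 0 1" unfolding f'_def using hf by (intro holomorphic_deriv) auto
  define a where "a = coef f"
  define b where "b = coef f'"
  have ba: "b n = of_nat (Suc n) * a (Suc n)" for n unfolding a_def b_def f'_def by (rule coef_deriv)
  define w where "w \<rho> \<theta> = of_real \<rho> * cis \<theta>" for \<rho> \<theta>
  have nw: "norm (w \<rho> \<theta>) = \<rho>" if "0 \<le> \<rho>" for \<rho> \<theta> using that by (simp add: w_def norm_mult)
  have wb: "w \<rho> \<theta> \<in> ball 0 1" if "0 \<le> \<rho>" "\<rho> < 1" for \<rho> \<theta> using nw[OF that(1)] that by simp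
  have wc: "continuous_on S (w \<rho>)" for \<rho> S unfolding w_def by (intro continuous_intros)
  have contf: "continuous_on (ball 0 1) f" using hf by (rule holomorphic_on_imp_continuous_on)
  have contf': "continuous_on (ball 0 1) f'" using hf' by (rule holomorphic_on_imp_continuous_on)
  have cf: "continuous_on S (\<lambda>\<theta>. f (w \<rho> \<theta>))" if "0 \<le> \<rho>" "\<rho> < 1" for \<rho> S
    by (rule continuous_on_compose2[OF contf wc]) (use wb[OF that] in auto)
  have cf': "continuous_on S (\<lambda>\<theta>. f' (w \<rho> \<theta>))" if "0 \<le> \<rho>" "\<rho> < 1" for \<rho> S
    by (rule continuous_on_compose2[OF contf' wc]) (use wb[OF that] in auto)
  have sq: "cnj z * z = of_real (cmod z ^ 2)" for z :: complex
    using complex_norm_square[of z] by (simp add: mult.commute)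

  have inner: "(\<lambda>n. 2*pi*\<rho>^(2*n)*norm (b n)^2) sums integral {0..2*pi} (\<lambda>\<theta>. cmod (f' (w \<rho> \<theta>))^2)"
    if "0 \<le> \<rho>" "\<rho> < 1" for \<rho>
  proof -
    have "(\<lambda>n. cnj (b n) * (b n * of_real (2*pi*\<rho>^(2*n)))) sums integral {0..2*pi} (\<lambda>\<theta>. cnj (f' (w \<rho> \<theta>)) * f' (w \<rho> \<theta>))"
    proof (rule parseval_circle)
      show "(\<lambda>n. b n * (of_real \<rho> * cis \<theta>)^n) sums f' (w \<rho> \<theta>)" for \<theta>
        unfolding b_def using ps_sums[OF hf', of "w \<rho> \<theta>"] wb[OF that] by (simp add: w_def)
      then show "(\<lambda>n. b n * (of_real \<rho> * cis \<theta>)^n) sums f' (w \<rho> \<theta>)" for \<theta> .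
      show "continuous_on {0..2*pi} (\<lambda>\<theta>. f' (w \<rho> \<theta>))" by (rule cf'[OF that])
      show "summable (\<lambda>n. norm (b n) * \<rho>^n)" unfolding b_def using ps_abs[OF hf' that] .
      then show "summable (\<lambda>n. norm (b n) * \<rho>^n)" .
    qed (use that in auto)
    moreover have e1: "cnj (b n) * (b n * of_real (2*pi*\<rho>^(2*n))) = of_real (2*pi*\<rho>^(2*n)*norm (b n)^2)" for n
      by (simp add: mult.assoc[symmetric] sq)
    moreover have e2: "integral {0..2*pi} (\<lambda>\<theta>. cnj (f' (w \<rho> \<theta>)) * f' (w \<rho> \<theta>))
       = of_real (integral {0..2*pi} (\<lambda>\<theta>. cmod (f' (w \<rho> \<theta>))^2))"
      unfolding sq by (rule integral_of_real_cont) (intro continuous_intros cf'[OF that])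
    ultimately have "(\<lambda>n. of_real (2*pi*\<rho>^(2*n)*norm (b n)^2) :: complex) sums of_real (integral {0..2*pi} (\<lambda>\<theta>. cmod (f' (w \<rho> \<theta>))^2))"
      by (simp only: e1 e2)
    then show ?thesis by (simp only: sums_of_real_iff)
  qed

  have bsum: "summable (\<lambda>n. norm (b n) * r^n)" unfolding b_def using ps_abs[OF hf' assms(3,4)] .
  define X where "X = (\<Sum>n. norm (b n) * r^n)"
  have xle: "norm (b n) * r^n \<le> X" for n
    using sum_le_suminf[OF bsum, of "{n}"] assms(3) by (simp add: X_def)
  define M where "M n = 2*pi*norm (b n)^2*r^(2*n+1)" for n
  have Msum: "summable M"
  proof (rule summable_comparison_test'[of "\<lambda>n. (2*pi*r*X) * (norm (b n) * r^n)"])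
    show "summable (\<lambda>n. (2*pi*r*X) * (norm (b n) * r^n))" using bsum by (rule summable_mult)
    fix n :: nat
    have "norm (M n) = (2*pi*r) * ((norm (b n) * r^n) * (norm (b n) * r^n))"
      using assms(3) by (simp add: M_def power2_eq_square power_add power_mult mult_ac)
    also have "\<dots> \<le> (2*pi*r) * (X * (norm (b n) * r^n))"
      using assms(3) xle[of n] by (intro mult_left_mono mult_right_mono) auto
    finally show "norm (M n) \<le> (2*pi*r*X) * (norm (b n) * r^n)" by (simp add: mult_ac)
  qed
  define u where "u n \<rho> = 2*pi*norm (b n)^2*\<rho>^(2*n+1)" for n and \<rho> :: real
  have inner2: "integral {0..2*pi} (\<lambda>\<theta>. cmod (f' (w \<rho> \<theta>))^2 * \<rho>) = (\<Sum>n. u n \<rho>)"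
    if "\<rho> \<in> {0..r}" for \<rho>
  proof -
    from that assms have r: "0 \<le> \<rho>" "\<rho> < 1" by auto
    have "(\<lambda>n. 2*pi*\<rho>^(2*n)*norm (b n)^2 * \<rho>) sums (integral {0..2*pi} (\<lambda>\<theta>. cmod (f' (w \<rho> \<theta>))^2) * \<rho>)"
      by (rule sums_mult2[OF inner[OF r]])
    moreover have "2*pi*\<rho>^(2*n)*norm (b n)^2 * \<rho> = u n \<rho>" for n by (simp add: u_def mult_ac)
    ultimately have "(\<lambda>n. u n \<rho>) sums (integral {0..2*pi} (\<lambda>\<theta>. cmod (f' (w \<rho> \<theta>))^2) * \<rho>)" by simp
    then show ?thesis by (simp add: sums_iff)
  qed
  have area_eq: "area_fn r f = integral {0..r} (\<lambda>\<rho>. \<Sum>n. u n \<rho>)"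
    unfolding area_fn_def f'_def[symmetric] w_def[symmetric]
    by (rule integral_cong) (rule inner2)
  have Asum: "(\<lambda>n. integral {0..r} (u n)) sums area_fn r f"
    unfolding area_eq
  proof (rule termwise_integral)
    show "continuous_on {0..r} (u n)" for n unfolding u_def by (intro continuous_intros)
    show "norm (u n \<rho>) \<le> M n" if "\<rho> \<in> {0..r}" for n \<rho>
      using that unfolding u_def M_def
      by (auto intro!: mult_left_mono power_mono simp: abs_mult simp del: power_Suc)
    show "summable M" by (rule Msum)
  qed
  have iu: "integral {0..r} (u n) = 2*pi*norm (b n)^2 * (r^(2*n+2) / (2*n+2))" for n
    unfolding u_def using integral_pow[OF assms(3), of "2*n+1"] by simp

  define c where "c n = of_nat n * a n" for n
  define J where "J = integral {0..2*pi} (\<lambda>\<theta>. cnj (f (w r \<theta>)) * (w r \<theta> * f' (w r \<theta>)))"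
  have Jsum: "(\<lambda>n. cnj (a n) * (c n * of_real (2*pi*r^(2*n)))) sums J"
    unfolding J_def
  proof (rule parseval_circle)
    show "(\<lambda>n. a n * (of_real r * cis \<theta>)^n) sums f (w r \<theta>)" for \<theta>
      unfolding a_def using ps_sums[OF hf, of "w r \<theta>"] wb[OF assms(3,4)] by (simp add: w_def)
    show "(\<lambda>n. c n * (of_real r * cis \<theta>)^n) sums (w r \<theta> * f' (w r \<theta>))" for \<theta>
    proof -
      have "(\<lambda>n. b n * (w r \<theta>)^n) sums f' (w r \<theta>)"
        unfolding b_def using ps_sums[OF hf', of "w r \<theta>"] wb[OF assms(3,4)] by simp
      then have "(\<lambda>n. w r \<theta> * (b n * (w r \<theta>)^n)) sums (w r \<theta> * f' (w r \<theta>))" by (rule sums_mult)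
      moreover have "w r \<theta> * (b n * (w r \<theta>)^n) = c (Suc n) * (w r \<theta>)^(Suc n)" for n
        by (simp add: ba c_def)
      ultimately have "(\<lambda>n. c (Suc n) * (w r \<theta>)^(Suc n)) sums (w r \<theta> * f' (w r \<theta>))" by simp
      then have "(\<lambda>n. c n * (w r \<theta>)^n) sums (w r \<theta> * f' (w r \<theta>) + c 0 * (w r \<theta>)^0)"
        by (rule sums_Suc_iff[THEN iffD1])
      then show ?thesis by (simp add: c_def w_def)
    qed
    show "continuous_on {0..2*pi} (\<lambda>\<theta>. w r \<theta> * f' (w r \<theta>))"
      by (intro continuous_intros wc cf'[OF assms(3,4)])
    show "summable (\<lambda>n. norm (a n) * r^n)" unfolding a_def by (rule ps_abs[OF hf assms(3,4)])
    have "summable (\<lambda>n. norm (c (Suc n)) * r^(Suc n))"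
    proof -
      have "summable (\<lambda>n. r * (norm (b n) * r^n))" using bsum by (rule summable_mult)
      moreover have "r * (norm (b n) * r^n) = norm (c (Suc n)) * r^(Suc n)" for n
        by (simp add: ba c_def norm_mult)
      ultimately show ?thesis by simp
    qed
    then show "summable (\<lambda>n. norm (c n) * r^n)" by (rule summable_Suc_iff[THEN iffD1])
  qed (use assms in auto)
  define t where "t n = 2*pi*r^(2*n) * (real n * norm (a n)^2)" for n
  have "cnj (a n) * (c n * of_real (2*pi*r^(2*n))) = of_real (t n)" for n
  proof -
    have "cnj (a n) * (c n * of_real (2*pi*r^(2*n))) = (cnj (a n) * a n) * (of_nat n * of_real (2*pi*r^(2*n)))"
      by (simp add: c_def mult_ac)
    also have "\<dots> = of_real (norm (a n)^2) * (of_real (real n) * of_real (2*pi*r^(2*n)))"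
      by (simp only: sq of_real_of_nat_eq)
    also have "\<dots> = of_real (t n)" by (simp only: t_def of_real_mult[symmetric] mult_ac)
    finally show ?thesis .
  qed
  with Jsum have "(\<lambda>n. of_real (t n) :: complex) sums J" by simp
  then have tsum: "summable t" by (simp add: summable_of_real_iff[symmetric] sums_iff)
  define T where "T = suminf t"
  have tT: "t sums T" using tsum by (simp add: T_def sums_iff)
  then have "(\<lambda>n. of_real (t n) :: complex) sums of_real T" by (simp add: sums_of_real_iff)
  with \<open>(\<lambda>n. of_real (t n) :: complex) sums J\<close> have JT: "J = of_real T" using sums_unique2 by blast
  have "(\<lambda>n. t (Suc n)) sums (T - t 0)" using tT by (simp add: sums_Suc_iff)
  moreover have "t 0 = 0" by (simp add: t_def)
  ultimately have "(\<lambda>n. t (Suc n)) sums T" by simp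
  then have "(\<lambda>n. (1/2) * t (Suc n)) sums ((1/2) * T)" by (rule sums_mult)
  moreover have iu2: "integral {0..r} (u n) = (1/2) * t (Suc n)" for n
  proof -
    have "norm (b n) = real (Suc n) * norm (a (Suc n))" unfolding ba norm_mult norm_of_nat ..
    then have "norm (b n)^2 = real (Suc n)^2 * norm (a (Suc n))^2" by (simp only: power_mult_distrib)
    moreover have "real (2*n+2) = 2 * real (Suc n)" by simp
    moreover have "2 * Suc n = 2*n+2" by simp
    ultimately show ?thesis unfolding iu t_def by (simp add: field_simps power2_eq_square)
  qed
  ultimately have "(\<lambda>n. integral {0..r} (u n)) sums ((1/2) * T)" by (simp only: iu2)
  with Asum have AT: "area_fn r f = (1/2) * T" using sums_unique2 by blast
  define N where "N = Hinf_norm f"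
  have Nb: "cmod (f z) \<le> N" if "z \<in> ball 0 1" for z
  proof -
    obtain B where B: "\<And>x. x \<in> f ` ball 0 1 \<Longrightarrow> norm x \<le> B" using assms(2) by (auto simp: bounded_iff)
    have "bdd_above ((\<lambda>z. cmod (f z)) ` ball 0 1)" by (rule bdd_aboveI2[where M=B]) (use B in auto)
    then show ?thesis unfolding N_def Hinf_norm_def by (rule cSUP_upper[OF that])
  qed
  have "norm J \<le> integral {0..2*pi} (\<lambda>\<theta>. N * cmod (f' (w r \<theta>)))"
    unfolding J_def
  proof (rule Henstock_Kurzweil_Integration.integral_norm_bound_integral)
    show "(\<lambda>\<theta>. cnj (f (w r \<theta>)) * (w r \<theta> * f' (w r \<theta>))) integrable_on {0..2*pi}"
      by (intro integrable_continuous_interval continuous_intros wc cf[OF assms(3,4)] cf'[OF assms(3,4)])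
    show "(\<lambda>\<theta>. N * cmod (f' (w r \<theta>))) integrable_on {0..2*pi}"
      by (intro integrable_continuous_interval continuous_intros wc cf[OF assms(3,4)] cf'[OF assms(3,4)])
    fix \<theta> assume "\<theta> \<in> {0..2*pi}"
    have "norm (cnj (f (w r \<theta>)) * (w r \<theta> * f' (w r \<theta>))) = cmod (f (w r \<theta>)) * (r * cmod (f' (w r \<theta>)))"
      using nw[OF assms(3)] by (simp add: norm_mult)
    also have "\<dots> \<le> N * (1 * cmod (f' (w r \<theta>)))"
      using Nb[OF wb[OF assms(3,4)]] assms(3,4) order_trans[OF norm_ge_zero Nb[OF wb[OF assms(3,4)]]]
      by (intro mult_mono) auto
    finally show "norm (cnj (f (w r \<theta>)) * (w r \<theta> * f' (w r \<theta>))) \<le> N * cmod (f' (w r \<theta>))" by simp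
  qed
  also have "\<dots> = N * integral {0..2*pi} (\<lambda>\<theta>. cmod (f' (w r \<theta>)))" by simp
  finally have "\<bar>T\<bar> \<le> N * integral {0..2*pi} (\<lambda>\<theta>. cmod (f' (w r \<theta>)))" using JT by simp
  then have "area_fn r f \<le> (1/2) * N * integral {0..2*pi} (\<lambda>\<theta>. cmod (f' (w r \<theta>)))" using AT by simp
  then show ?thesis by (simp add: N_def f'_def w_def)
qed


end
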